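(* Let $B(z)=\prod_{i=1}^n\frac{z-a_i}{1-\overline{a_i}z}$ be a finite Blaschke product with $a_1,\ldots,a_n$ in the open unit disc and $a_1=0$. Then \[H^\infty=e_{00}H^\infty(B)\oplus e_{10}H^\infty(B)\oplus\cdots\oplus e_{n-1,0}H^\infty(B),\] i.e. every $f\in H^\infty$ can be written as $f=\sum_{j=0}^{n-1}e_{j0}f_j$ with $f_j\in H^\infty(B)$, the sum being direct.
   Context: $H^p$ denote the classical Hardy spaces on the unit circle. $H^\infty(B)=\{f\circ B: f\in H^\infty\}$. For $0\le j\le n-1$, $B_j(z)=\prod_{i=1}^{j}\frac{z-a_i}{1-\overline{a_i}z}$ (with $B_0=1$) and $e_{j0}(z)=\frac{\sqrt{1-|a_{j+1}|^2}}{1-\overline{a_{j+1}}z}B_j(z)$. *)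

theory Defs
  imports "HOL-Analysis.Analysis"
begin

text \<open>Functions on the open unit disc are represented as total functions
  complex => complex; only their values on ball 0 1 matter.\<close>

definition Hinf :: "(complex \<Rightarrow> complex) set" where
  "Hinf = {f. f holomorphic_on ball 0 1 \<and> bounded (f ` ball 0 1)}"

definition Hinf_comp :: "(complex \<Rightarrow> complex) \<Rightarrow> (complex \<Rightarrow> complex) set" where
  "Hinf_comp B = {g. \<exists>f\<in>Hinf. \<forall>z\<in>ball 0 1. g z = f (B z)}"

definition blaschke_partial :: "(nat \<Rightarrow> complex) \<Rightarrow> nat \<Rightarrow> complex \<Rightarrow> complex" where
  "blaschke_partial a j z = (\<Prod>i=1..j. (z - a i) / (1 - cnj (a i) * z))"

definition e0 :: "(nat \<Rightarrow> complex) \<Rightarrow> nat \<Rightarrow> complex \<Rightarrow> complex" where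
  "e0 a j z = complex_of_real (sqrt (1 - (cmod (a (Suc j)))\<^sup>2)) / (1 - cnj (a (Suc j)) * z)
              * blaschke_partial a j z"

end

theory Submission
  imports Defs "HOL-Complex_Analysis.Complex_Analysis" "HOL-Computational_Algebra.Fundamental_Theorem_Algebra"
begin


definition sq :: "(nat \<Rightarrow> complex) \<Rightarrow> nat \<Rightarrow> complex" where
  "sq a j = complex_of_real (sqrt (1 - (cmod (a (Suc j)))\<^sup>2))"

definition et :: "(nat \<Rightarrow> complex) \<Rightarrow> nat \<Rightarrow> nat \<Rightarrow> complex \<Rightarrow> complex" where
  "et a n j z = sq a j / (1 - cnj (a (Suc j)) * z) * (\<Prod>i=Suc (Suc j)..n. (z - a i) / (1 - cnj (a i) * z))"

definition Lk :: "(nat \<Rightarrow> complex) \<Rightarrow> nat \<Rightarrow> complex \<Rightarrow> complex \<Rightarrow> complex" where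
  "Lk a n p z = (\<Sum>j<n. e0 a j z * et a n j p)"

lemma e0_sq: "e0 a j z = sq a j / (1 - cnj (a (Suc j)) * z) * blaschke_partial a j z"
  by (simp add: e0_def sq_def)

lemma sq_sq: assumes "cmod (a (Suc j)) \<le> 1"
  shows "sq a j * sq a j = 1 - a (Suc j) * cnj (a (Suc j))"
proof -
  have "0 \<le> 1 - (cmod (a (Suc j)))\<^sup>2" 
  proof -
    have "(cmod (a (Suc j)))\<^sup>2 \<le> 1" using assms norm_ge_zero power_le_one by blast
    then show ?thesis by simp
  qed
  then have "sq a j * sq a j = complex_of_real (1 - (cmod (a (Suc j)))\<^sup>2)"
    unfolding sq_def of_real_mult[symmetric] by simp
  also have "\<dots> = 1 - a (Suc j) * cnj (a (Suc j))"
    by (simp only: of_real_diff of_real_1 complex_norm_square)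
  finally show ?thesis .
qed

lemma bfactor_diff:
  assumes "1 - cnj c * z \<noteq> 0" "1 - cnj c * p \<noteq> 0"
  shows "(z - c) / (1 - cnj c * z) - (p - c) / (1 - cnj c * p)
       = (z - p) * ((1 - c * cnj c) / ((1 - cnj c * z) * (1 - cnj c * p)))"
  using assms by (simp add: field_simps)

lemma KI:
  assumes "\<forall>i\<in>{1..n}. cmod (a i) \<le> 1"
    and "\<forall>i\<in>{1..n}. 1 - cnj (a i) * z \<noteq> 0" "\<forall>i\<in>{1..n}. 1 - cnj (a i) * p \<noteq> 0"
  shows "blaschke_partial a n z - blaschke_partial a n p = (z - p) * Lk a n p z"
  using assms
proof (induction n)
  case 0
  then show ?case by (simp add: blaschke_partial_def Lk_def)
next
  case (Suc n)
  define c where "c = a (Suc n)"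
  define bz where "bz = (z - c) / (1 - cnj c * z)"
  define bp where "bp = (p - c) / (1 - cnj c * p)"
  have cz: "1 - cnj c * z \<noteq> 0" and cp: "1 - cnj c * p \<noteq> 0" and c1: "cmod c \<le> 1"
    using Suc.prems by (auto simp: c_def)
  have IH: "blaschke_partial a n z - blaschke_partial a n p = (z - p) * Lk a n p z"
    using Suc.prems by (intro Suc.IH) auto
  have BS: "blaschke_partial a (Suc n) x = blaschke_partial a n x * ((x - c) / (1 - cnj c * x))" for x
    by (simp add: blaschke_partial_def c_def prod.nat_ivl_Suc' mult.commute)
  have etS: "et a (Suc n) j p = et a n j p * bp" if "j < n" for j
  proof -
    have "(\<Prod>i=Suc (Suc j)..Suc n. (p - a i) / (1 - cnj (a i) * p))
        = bp * (\<Prod>i=Suc (Suc j)..n. (p - a i) / (1 - cnj (a i) * p))"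
      using that by (simp add: prod.nat_ivl_Suc' bp_def c_def)
    then show ?thesis by (simp add: et_def)
  qed
  have etn: "et a (Suc n) n p = sq a n / (1 - cnj c * p)"
    by (simp add: et_def c_def)
  have LS: "Lk a (Suc n) p z = Lk a n p z * bp + e0 a n z * (sq a n / (1 - cnj c * p))"
    by (simp add: Lk_def etS etn sum_distrib_right mult.assoc)
  have sqn: "sq a n * sq a n = 1 - c * cnj c"
    using sq_sq[of a n] c1 by (simp add: c_def)
  have "blaschke_partial a (Suc n) z - blaschke_partial a (Suc n) p
      = (blaschke_partial a n z - blaschke_partial a n p) * bp + blaschke_partial a n z * (bz - bp)"
    unfolding BS bz_def[symmetric] bp_def[symmetric] by (simp add: algebra_simps)
  also have "bz - bp = (z - p) * ((1 - c * cnj c) / ((1 - cnj c * z) * (1 - cnj c * p)))"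
    unfolding bz_def bp_def by (rule bfactor_diff[OF cz cp])
  also have "blaschke_partial a n z * ((z - p) * ((1 - c * cnj c) / ((1 - cnj c * z) * (1 - cnj c * p))))
      = (z - p) * (e0 a n z * (sq a n / (1 - cnj c * p)))"
  proof -
    have E: "e0 a n z = sq a n / (1 - cnj c * z) * blaschke_partial a n z" by (simp add: e0_sq c_def)
    show ?thesis unfolding E sqn[symmetric] using cz cp by (simp add: field_simps)
  qed
  finally show ?case unfolding IH LS by (simp add: algebra_simps)
qed


lemma prod_split3:
  fixes f :: "nat \<Rightarrow> 'a::comm_monoid_mult"
  assumes "j < n"
  shows "(\<Prod>i=1..n. f i) = (\<Prod>i=1..j. f i) * f (Suc j) * (\<Prod>i=Suc (Suc j)..n. f i)"
proof -
  have "(\<Prod>i=1..j + (n - j). f i) = (\<Prod>i=1..j. f i) * (\<Prod>i=j+1..j + (n - j). f i)"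
    by (rule prod.ub_add_nat) simp
  moreover have "(\<Prod>i=Suc j..n. f i) = f (Suc j) * (\<Prod>i=Suc (Suc j)..n. f i)"
    using assms by (intro prod.atLeast_Suc_atMost) simp
  ultimately show ?thesis using assms by (simp add: mult.assoc)
qed

lemma bfac_norm_sq:
  fixes z c :: complex
  shows "(cmod (z - c))\<^sup>2 - (cmod (1 - cnj c * z))\<^sup>2 = ((cmod z)\<^sup>2 - 1) * (1 - (cmod c)\<^sup>2)"
  unfolding cmod_power2 by (simp add: power2_eq_square algebra_simps)

lemma bfac_lt1:
  fixes z c :: complex
  assumes "cmod c < 1" "cmod z < 1"
  shows "cmod ((z - c) / (1 - cnj c * z)) < 1"
proof -
  have d: "1 - cnj c * z \<noteq> 0"
  proof
    assume "1 - cnj c * z = 0"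
    then have "cnj c * z = 1" by simp
    then have "cmod c * cmod z = 1" by (metis complex_mod_cnj norm_mult norm_one)
    moreover have "cmod c * cmod z < 1 * 1" by (rule mult_strict_mono) (use assms in auto)
    ultimately show False by simp
  qed
  have "(cmod z)\<^sup>2 < 1" using assms by (simp add: abs_square_less_1)
  moreover have "(cmod c)\<^sup>2 < 1" using assms by (simp add: abs_square_less_1)
  ultimately have "((cmod z)\<^sup>2 - 1) * (1 - (cmod c)\<^sup>2) < 0" by (intro mult_neg_pos) auto
  then have "(cmod (z - c))\<^sup>2 < (cmod (1 - cnj c * z))\<^sup>2" using bfac_norm_sq[of z c] by linarith
  then have "cmod (z - c) < cmod (1 - cnj c * z)" by (rule power_less_imp_less_base) simp
  then show ?thesis using d by (simp add: norm_divide divide_less_eq)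
qed

lemma bfac_eq1:
  fixes z c :: complex
  assumes "cmod c < 1" "cmod z = 1"
  shows "cmod ((z - c) / (1 - cnj c * z)) = 1"
proof -
  have d: "1 - cnj c * z \<noteq> 0"
  proof
    assume "1 - cnj c * z = 0"
    then have "cnj c * z = 1" by simp
    then have "cmod c * cmod z = 1" by (metis complex_mod_cnj norm_mult norm_one)
    then show False using assms by simp
  qed
  have "(cmod (z - c))\<^sup>2 = (cmod (1 - cnj c * z))\<^sup>2" using bfac_norm_sq[of z c] assms by simp
  then have "cmod (z - c) = cmod (1 - cnj c * z)" using power2_eq_iff_nonneg norm_ge_zero by blast
  then show ?thesis using d by (simp add: norm_divide)
qed

lemma bfac_ge1:
  fixes z c :: complex
  assumes "cmod c < 1" "cmod z \<ge> 1" "1 - cnj c * z \<noteq> 0"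
  shows "cmod ((z - c) / (1 - cnj c * z)) \<ge> 1"
proof -
  have "(cmod z)\<^sup>2 \<ge> 1" using assms by (simp add: abs_square_le_1 one_le_power)
  moreover have "(cmod c)\<^sup>2 < 1" using assms by (simp add: abs_square_less_1)
  ultimately have "((cmod z)\<^sup>2 - 1) * (1 - (cmod c)\<^sup>2) \<ge> 0" by (intro mult_nonneg_nonneg) auto
  then have "(cmod (z - c))\<^sup>2 \<ge> (cmod (1 - cnj c * z))\<^sup>2" using bfac_norm_sq[of z c] by linarith
  then have "cmod (z - c) \<ge> cmod (1 - cnj c * z)" by (rule power2_le_imp_le) simp
  then show ?thesis using assms by (simp add: norm_divide le_divide_eq)
qed

locale BP =
  fixes a :: "nat \<Rightarrow> complex" and n :: nat
  assumes n1: "n \<ge> 1" and ain: "\<forall>i\<in>{1..n}. cmod (a i) < 1" and a1: "a 1 = 0"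
begin

abbreviation "B \<equiv> blaschke_partial a n"

definition M where "M = Max ((\<lambda>i. cmod (a i)) ` {1..n})"
definition R where "R = 2 / (1 + M)"

lemma M_props: "0 \<le> M" "M < 1" "\<And>i. i \<in> {1..n} \<Longrightarrow> cmod (a i) \<le> M"
proof -
  have ne: "(\<lambda>i. cmod (a i)) ` {1..n} \<noteq> {}" using n1 by auto
  show "\<And>i. i \<in> {1..n} \<Longrightarrow> cmod (a i) \<le> M" unfolding M_def by (intro Max_ge) auto
  then have "cmod (a 1) \<le> M" using n1 by simp
  then show "0 \<le> M" using norm_ge_zero[of "a 1"] by linarith
  show "M < 1" unfolding M_def using ne ain by (subst Max_less_iff) auto
qed

lemma R_gt1: "R > 1"
  using M_props by (simp add: R_def field_simps)

lemma den_nz: assumes "z \<in> ball 0 R" "i \<in> {1..n}" shows "1 - cnj (a i) * z \<noteq> 0"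
proof
  assume "1 - cnj (a i) * z = 0"
  then have "cnj (a i) * z = 1" by simp
  then have e: "cmod (a i) * cmod z = 1" by (metis complex_mod_cnj norm_mult norm_one)
  have "cmod (a i) * cmod z \<le> M * cmod z" using M_props(3)[OF assms(2)] by (simp add: mult_right_mono)
  also have "\<dots> < M * R \<or> M = 0" using assms(1) M_props by auto
  then have "cmod (a i) * cmod z < 1"
  proof
    assume "M * cmod z < M * R"
    moreover have "M * R < 1" using M_props by (simp add: R_def field_simps)
    ultimately show ?thesis using \<open>cmod (a i) * cmod z \<le> M * cmod z\<close> by linarith
  next
    assume "M = 0" then show ?thesis using \<open>cmod (a i) * cmod z \<le> M * cmod z\<close> by simp
  qed
  then show False using e by simp
qed

lemma den_nz1: assumes "cmod z \<le> 1" "i \<in> {1..n}" shows "1 - cnj (a i) * z \<noteq> 0"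
  using den_nz[of z i] assms R_gt1 by simp

lemma ale1: "\<forall>i\<in>{1..n}. cmod (a i) \<le> 1" using ain by auto

lemma KI': assumes "z \<in> ball 0 R" "p \<in> ball 0 R"
  shows "B z - B p = (z - p) * Lk a n p z"
  by (rule KI) (use ale1 den_nz assms in auto)

lemma holo_B: "B holomorphic_on ball 0 R"
  unfolding blaschke_partial_def
  by (intro holomorphic_intros) (use den_nz in \<open>auto simp: atLeastAtMost_iff\<close>)

lemma holo_bp: "j \<le> n \<Longrightarrow> blaschke_partial a j holomorphic_on ball 0 R"
  unfolding blaschke_partial_def
  by (intro holomorphic_intros) (use den_nz in \<open>auto simp: atLeastAtMost_iff\<close>)

lemma holo_e0: "j < n \<Longrightarrow> e0 a j holomorphic_on ball 0 R"
  unfolding e0_sq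
  by (intro holomorphic_intros holo_bp) (use den_nz in \<open>auto simp: atLeastAtMost_iff\<close>)

lemma holo_et: "j < n \<Longrightarrow> et a n j holomorphic_on ball 0 R"
  unfolding et_def
  by (intro holomorphic_intros) (use den_nz in \<open>auto simp: atLeastAtMost_iff\<close>)

lemma holo_Lk: "(\<lambda>z. Lk a n p z) holomorphic_on ball 0 R"
  unfolding Lk_def by (intro holomorphic_intros holo_e0) auto

definition Lam where "Lam z = Lk a n z z"

lemma cont_Lam: "continuous_on (ball 0 R) Lam"
  unfolding Lam_def Lk_def
  by (intro continuous_intros holomorphic_on_imp_continuous_on holo_e0 holo_et) auto

end


lemma near_circle:
  fixes g :: "complex \<Rightarrow> complex"
  assumes cont: "continuous_on (cball 0 1) g" and circ: "\<And>z. cmod z = 1 \<Longrightarrow> c \<le> cmod (g z)"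
    and eps: "\<epsilon> > 0"
  shows "\<exists>r. 0 < r \<and> r < 1 \<and> (\<forall>z. r \<le> cmod z \<and> cmod z \<le> 1 \<longrightarrow> c - \<epsilon> < cmod (g z))"
proof -
  have "uniformly_continuous_on (cball 0 1) g"
    using cont by (intro compact_uniformly_continuous) auto
  then obtain d where d: "d > 0" and dd: "\<And>x y. x \<in> cball 0 1 \<Longrightarrow> y \<in> cball 0 1 \<Longrightarrow> dist y x < d \<Longrightarrow> dist (g y) (g x) < \<epsilon>"
    unfolding uniformly_continuous_on_def using eps by metis
  define r where "r = max (1/2) (1 - d/2)"
  have r: "0 < r" "r < 1" using d by (auto simp: r_def)
  have "c - \<epsilon> < cmod (g z)" if z: "r \<le> cmod z" "cmod z \<le> 1" for z
  proof -
    have zpos: "cmod z > 0" using z r by linarith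
    define u where "u = z / complex_of_real (cmod z)"
    have u1: "cmod u = 1" using zpos by (simp add: u_def norm_divide)
    have zu: "z = complex_of_real (cmod z) * u"
      unfolding u_def using zpos by simp
    have "z - u = complex_of_real (cmod z - 1) * u" by (subst zu) (simp add: algebra_simps)
    then have "dist z u = cmod (complex_of_real (cmod z - 1) * u)" by (simp add: dist_norm)
    also have "\<dots> = \<bar>cmod z - 1\<bar>" by (simp only: norm_mult norm_of_real u1) simp
    also have "\<dots> = 1 - cmod z" using z by simp
    also have "\<dots> < d" using z d by (simp add: r_def)
    finally have "dist z u < d" .
    then have "dist (g z) (g u) < \<epsilon>" using dd[of u z] z u1 by auto
    moreover have "c \<le> cmod (g u)" using circ u1 by simp
    moreover have "cmod (g u) \<le> cmod (g z) + dist (g z) (g u)"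
    proof -
      have "cmod (g z - (g z - g u)) \<le> cmod (g z) + cmod (g z - g u)" by (rule norm_triangle_ineq4)
      then show ?thesis by (simp add: dist_norm)
    qed
    ultimately show ?thesis by linarith
  qed
  then show ?thesis using r by blast
qed

context BP begin

definition Tl where "Tl j z = (\<Prod>i=Suc (Suc j)..n. (z - a i) / (1 - cnj (a i) * z))"

lemma et_Tl: "et a n j z = sq a j / (1 - cnj (a (Suc j)) * z) * Tl j z"
  by (simp add: et_def Tl_def)

lemma B_split: assumes "j < n"
  shows "B z = blaschke_partial a j z * ((z - a (Suc j)) / (1 - cnj (a (Suc j)) * z)) * Tl j z"
  unfolding blaschke_partial_def Tl_def by (rule prod_split3[OF assms])

lemma norm_prod_1:
  assumes "cmod z = 1" "\<forall>i\<in>I. cmod (a i) < 1"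
  shows "cmod (\<Prod>i\<in>I. (z - a i) / (1 - cnj (a i) * z)) = 1"
proof -
  have "cmod (\<Prod>i\<in>I. (z - a i) / (1 - cnj (a i) * z)) = (\<Prod>i\<in>I. cmod ((z - a i) / (1 - cnj (a i) * z)))"
    by (simp add: prod_norm)
  also have "\<dots> = 1" using assms by (intro prod.neutral) (auto intro: bfac_eq1)
  finally show ?thesis .
qed

lemma norm_prod_le1:
  assumes "cmod z \<le> 1" "\<forall>i\<in>I. cmod (a i) < 1"
  shows "cmod (\<Prod>i\<in>I. (z - a i) / (1 - cnj (a i) * z)) \<le> 1"
proof -
  have "cmod (\<Prod>i\<in>I. (z - a i) / (1 - cnj (a i) * z)) = (\<Prod>i\<in>I. cmod ((z - a i) / (1 - cnj (a i) * z)))"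
    by (simp add: prod_norm)
  also have "\<dots> \<le> 1"
  proof (rule prod_le_1)
    fix i assume "i \<in> I"
    then have ai: "cmod (a i) < 1" using assms by auto
    show "0 \<le> cmod ((z - a i) / (1 - cnj (a i) * z)) \<and> cmod ((z - a i) / (1 - cnj (a i) * z)) \<le> 1"
    proof (cases "cmod z = 1")
      case True then show ?thesis using bfac_eq1[OF ai] by simp
    next
      case False then have "cmod z < 1" using assms by simp
      then show ?thesis using bfac_lt1[OF ai] by (simp add: less_imp_le)
    qed
  qed
  finally show ?thesis .
qed

lemma B_circle: "cmod z = 1 \<Longrightarrow> cmod (B z) = 1"
  unfolding blaschke_partial_def by (rule norm_prod_1) (use ain in auto)

lemma B_le_z: assumes "cmod z \<le> 1" shows "cmod (B z) \<le> cmod z"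
proof -
  have "B z = (z - a 1) / (1 - cnj (a 1) * z) * (\<Prod>i=Suc 1..n. (z - a i) / (1 - cnj (a i) * z))"
    unfolding blaschke_partial_def using n1 by (intro prod.atLeast_Suc_atMost) simp
  also have "\<dots> = z * (\<Prod>i=2..n. (z - a i) / (1 - cnj (a i) * z))" using a1 by (simp add: numeral_2_eq_2)
  finally have "cmod (B z) = cmod z * cmod (\<Prod>i=2..n. (z - a i) / (1 - cnj (a i) * z))"
    by (simp add: norm_mult)
  also have "\<dots> \<le> cmod z * 1"
    by (intro mult_left_mono norm_prod_le1) (use assms ain in auto)
  finally show ?thesis by simp
qed

lemma B_ge1: assumes "cmod z \<ge> 1" "\<forall>i\<in>{1..n}. 1 - cnj (a i) * z \<noteq> 0"
  shows "cmod (B z) \<ge> 1"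
proof -
  have "cmod (B z) = (\<Prod>i=1..n. cmod ((z - a i) / (1 - cnj (a i) * z)))"
    unfolding blaschke_partial_def by (simp add: prod_norm)
  also have "\<dots> \<ge> 1"
    by (rule prod_ge_1) (use assms ain bfac_ge1 in auto)
  finally show ?thesis .
qed

lemma Lam_term:
  assumes z1: "cmod z = 1" and j: "j < n"
  shows "e0 a j z * et a n j z * (z * cnj (B z))
       = complex_of_real ((1 - (cmod (a (Suc j)))\<^sup>2) / (cmod (1 - cnj (a (Suc j)) * z))\<^sup>2)"
proof -
  define c where "c = a (Suc j)"
  define d where "d = 1 - cnj c * z"
  define X where "X = blaschke_partial a j z"
  define T where "T = Tl j z"
  have c1: "cmod c < 1" using ain j by (auto simp: c_def)
  have dnz: "d \<noteq> 0" unfolding d_def c_def by (rule den_nz1) (use z1 j in auto)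
  have hX: "X * cnj X = 1"
  proof -
    have "cmod X = 1" unfolding X_def blaschke_partial_def by (rule norm_prod_1) (use z1 ain j in auto)
    then show ?thesis by (metis complex_norm_square of_real_1 power_one)
  qed
  have hT: "T * cnj T = 1"
  proof -
    have "cmod T = 1" unfolding T_def Tl_def by (rule norm_prod_1) (use z1 ain j in auto)
    then show ?thesis by (metis complex_norm_square of_real_1 power_one)
  qed
  have hz: "z * cnj z = 1" by (metis complex_norm_square of_real_1 power_one z1)
  have hsq: "sq a j * sq a j = 1 - c * cnj c" using sq_sq[of a j] c1 by (simp add: c_def)
  have Bz: "B z = X * ((z - c) / d) * T" unfolding X_def T_def c_def d_def by (rule B_split[OF j])
  have e0z: "e0 a j z = sq a j / d * X" by (simp add: e0_sq X_def d_def c_def)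
  have etz: "et a n j z = sq a j / d * T" by (simp add: et_Tl T_def d_def c_def)
  have zc: "z * cnj (z - c) = d" unfolding d_def using hz by (simp add: algebra_simps)
  have cd: "cnj d \<noteq> 0" using dnz by simp
  have "e0 a j z * et a n j z * (z * cnj (B z))
      = (sq a j * sq a j) / (d * d) * (X * cnj X) * (T * cnj T) * (z * cnj (z - c)) / cnj d"
    unfolding e0z etz Bz by (simp add: field_simps)
  also have "\<dots> = (1 - c * cnj c) / (d * cnj d)"
    unfolding hX hT zc hsq using dnz cd by (simp add: field_simps)
  also have "\<dots> = complex_of_real ((1 - (cmod c)\<^sup>2) / (cmod d)\<^sup>2)"
    by (simp only: complex_norm_square[symmetric] of_real_divide of_real_diff of_real_1)
  finally show ?thesis by (simp add: c_def d_def)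
qed

lemma Lam_circle: assumes z1: "cmod z = 1" shows "cmod (Lam z) \<ge> 1"
proof -
  define r where "r j = (1 - (cmod (a (Suc j)))\<^sup>2) / (cmod (1 - cnj (a (Suc j)) * z))\<^sup>2" for j
  have rnn: "r j \<ge> 0" if "j < n" for j
  proof -
    have "cmod (a (Suc j)) \<le> 1" using bspec[OF ain, of "Suc j"] that by simp
    then have "(cmod (a (Suc j)))\<^sup>2 \<le> 1" by (simp add: abs_square_le_1)
    then show ?thesis unfolding r_def by simp
  qed
  have r0: "r 0 = 1" unfolding r_def using a1 by simp
  have "Lam z * (z * cnj (B z)) = (\<Sum>j<n. e0 a j z * et a n j z * (z * cnj (B z)))"
    unfolding Lam_def Lk_def by (simp add: sum_distrib_right)
  also have "\<dots> = (\<Sum>j<n. complex_of_real (r j))"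
    using Lam_term[OF z1] by (simp add: r_def)
  also have "\<dots> = complex_of_real (\<Sum>j<n. r j)" by simp
  finally have eq: "Lam z * (z * cnj (B z)) = complex_of_real (\<Sum>j<n. r j)" .
  have "1 \<le> (\<Sum>j<n. r j)"
  proof -
    have "r 0 \<le> (\<Sum>j<n. r j)" using n1 rnn by (intro member_le_sum) auto
    then show ?thesis using r0 by simp
  qed
  moreover have "cmod (Lam z) = cmod (Lam z * (z * cnj (B z)))"
    using z1 B_circle[OF z1] by (simp add: norm_mult)
  moreover have "cmod (Lam z * (z * cnj (B z))) = \<bar>\<Sum>j<n. r j\<bar>"
    unfolding eq by (simp only: norm_of_real)
  ultimately show ?thesis by linarith
qed

lemma cont_Lam1: "continuous_on (cball 0 1) Lam"
  by (rule continuous_on_subset[OF cont_Lam]) (use R_gt1 in auto)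

lemma cont_B1: "continuous_on (cball 0 1) B"
  by (rule continuous_on_subset[OF holomorphic_on_imp_continuous_on[OF holo_B]]) (use R_gt1 in auto)

definition r1 where "r1 = (SOME r. 0 < r \<and> r < 1 \<and> (\<forall>z. r \<le> cmod z \<and> cmod z \<le> 1 \<longrightarrow> 1 - 1/2 < cmod (Lam z)))"

lemma r1_props: "0 < r1" "r1 < 1" "\<And>z. r1 \<le> cmod z \<Longrightarrow> cmod z \<le> 1 \<Longrightarrow> 1/2 < cmod (Lam z)"
proof -
  have "\<exists>r. 0 < r \<and> r < 1 \<and> (\<forall>z. r \<le> cmod z \<and> cmod z \<le> 1 \<longrightarrow> 1 - 1/2 < cmod (Lam z))"
    by (rule near_circle[OF cont_Lam1]) (use Lam_circle in auto)
  from someI_ex[OF this] show "0 < r1" "r1 < 1" "\<And>z. r1 \<le> cmod z \<Longrightarrow> cmod z \<le> 1 \<Longrightarrow> 1/2 < cmod (Lam z)"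
    unfolding r1_def[symmetric] by auto
qed

lemma B_near: assumes "m < 1"
  shows "\<exists>r. 0 < r \<and> r < 1 \<and> (\<forall>z. r \<le> cmod z \<and> cmod z \<le> 1 \<longrightarrow> m < cmod (B z))"
proof -
  have "\<exists>r. 0 < r \<and> r < 1 \<and> (\<forall>z. r \<le> cmod z \<and> cmod z \<le> 1 \<longrightarrow> 1 - (1 - m) < cmod (B z))"
    by (rule near_circle[OF cont_B1]) (use B_circle assms in auto)
  then show ?thesis by simp
qed

end


context BP begin

definition Pp :: "complex poly" where "Pp = (\<Prod>i\<in>{1..n}. [:- a i, 1:])"
definition Dp :: "complex poly" where "Dp = (\<Prod>i\<in>{1..n}. [:1, - cnj (a i):])"
definition Qp :: "complex \<Rightarrow> complex poly" where "Qp w = Pp - smult w Dp"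
definition fib :: "complex \<Rightarrow> complex set" where "fib w = {z \<in> ball 0 1. B z = w}"

lemma poly_Pp: "poly Pp z = (\<Prod>i=1..n. z - a i)"
  unfolding Pp_def poly_prod by (intro prod.cong) auto

lemma poly_Dp: "poly Dp z = (\<Prod>i=1..n. 1 - cnj (a i) * z)"
  unfolding Dp_def poly_prod by (intro prod.cong) (auto simp: algebra_simps)

lemma Dp_nz: "z \<in> ball 0 R \<Longrightarrow> poly Dp z \<noteq> 0"
  unfolding poly_Dp using den_nz by auto

lemma B_PD: "B z = poly Pp z / poly Dp z"
  unfolding blaschke_partial_def poly_Pp poly_Dp by (rule prod_dividef)

lemma degree_Pp: "degree Pp = n" and lc_Pp: "lead_coeff Pp = 1"
proof -
  have "degree Pp = (\<Sum>i\<in>{1..n}. degree [:- a i, 1:])"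
    unfolding Pp_def by (rule degree_prod_sum_eq) auto
  then show "degree Pp = n" by simp
  show "lead_coeff Pp = 1" unfolding Pp_def lead_coeff_prod by simp
qed

lemma degree_Dp: "degree Dp < n"
proof -
  have "Dp = [:1, - cnj (a 1):] * (\<Prod>i\<in>{Suc 1..n}. [:1, - cnj (a i):])"
    unfolding Dp_def using n1 by (intro prod.atLeast_Suc_atMost) simp
  also have "[:1, - cnj (a 1):] = 1" using a1 by (simp add: one_pCons)
  finally have "Dp = (\<Prod>i\<in>{Suc 1..n}. [:1, - cnj (a i):])" by simp
  then have "degree Dp \<le> (\<Sum>i\<in>{Suc 1..n}. degree [:1, - cnj (a i):])"
    using degree_prod_sum_le[of "{Suc 1..n}" "\<lambda>i. [:1, - cnj (a i):]"] by (simp add: o_def)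
  also have "\<dots> \<le> (\<Sum>i\<in>{Suc 1..n}. 1)"
    by (intro sum_mono) (simp add: degree_pCons_le)
  also have "\<dots> = n - 1" by simp
  finally show ?thesis using n1 by simp
qed

lemma coeff_Qp: "coeff (Qp w) n = 1"
proof -
  have "coeff Pp n = 1" using lc_Pp degree_Pp by simp
  moreover have "coeff Dp n = 0" using degree_Dp by (simp add: coeff_eq_0)
  ultimately show ?thesis by (simp add: Qp_def)
qed

lemma Qp_nz: "Qp w \<noteq> 0"
proof
  assume "Qp w = 0"
  then have "coeff (Qp w) n = 0" by simp
  then show False using coeff_Qp[of w] by simp
qed

lemma degree_Qp: "degree (Qp w) = n"
proof (rule antisym)
  have "degree (Qp w) \<le> max (degree Pp) (degree (smult w Dp))"
    unfolding Qp_def by (rule degree_diff_le_max)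
  also have "\<dots> \<le> n" using degree_Pp degree_Dp degree_smult_le[of w Dp] by simp
  finally show "degree (Qp w) \<le> n" .
  show "n \<le> degree (Qp w)" using coeff_Qp by (intro le_degree) simp
qed

lemma poly_Qp_ball: assumes "z \<in> ball 0 R" shows "poly (Qp w) z = poly Dp z * (B z - w)"
  using Dp_nz[OF assms] by (simp add: Qp_def B_PD field_simps)

lemma roots_Qp: assumes w: "cmod w < 1" shows "{z. poly (Qp w) z = 0} = fib w"
proof (intro set_eqI iffI)
  fix z assume "z \<in> fib w"
  then have "z \<in> ball 0 R" "B z = w" using R_gt1 by (auto simp: fib_def)
  then show "z \<in> {z. poly (Qp w) z = 0}" using poly_Qp_ball by simp
next
  fix z assume "z \<in> {z. poly (Qp w) z = 0}"
  then have Q0: "poly Pp z = w * poly Dp z" by (simp add: Qp_def)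
  show "z \<in> fib w"
  proof (cases "poly Dp z = 0")
    case True
    then obtain i where i: "i \<in> {1..n}" "1 - cnj (a i) * z = 0" unfolding poly_Dp by auto
    then have "cnj (a i) * z = 1" by simp
    then have e: "cmod (a i) * cmod z = 1" by (metis complex_mod_cnj norm_mult norm_one)
    have ai: "cmod (a i) < 1" using ain i by auto
    have z1: "cmod z > 1"
    proof (rule ccontr)
      assume "\<not> cmod z > 1"
      then have "cmod (a i) * cmod z \<le> cmod (a i) * 1" by (intro mult_left_mono) auto
      then show False using e ai by simp
    qed
    have "poly Pp z \<noteq> 0"
    proof
      assume "poly Pp z = 0"
      then obtain k where k: "k \<in> {1..n}" "z = a k" unfolding poly_Pp by auto
      then show False using bspec[OF ain k(1)] z1 by simp
    qed
    then show ?thesis using Q0 True by simp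
  next
    case False
    then have Bz: "B z = w" using Q0 by (simp add: B_PD)
    have dn: "\<forall>i\<in>{1..n}. 1 - cnj (a i) * z \<noteq> 0" using False unfolding poly_Dp by auto
    have "cmod z < 1"
    proof (rule ccontr)
      assume "\<not> cmod z < 1"
      then have "cmod (B z) \<ge> 1" using B_ge1 dn by simp
      then show False using Bz w by simp
    qed
    then show ?thesis using Bz by (simp add: fib_def)
  qed
qed

lemma fib_finite: "cmod w < 1 \<Longrightarrow> finite (fib w)"
  using roots_Qp[of w] poly_roots_finite[OF Qp_nz[of w]] by simp

lemma fib_card: "cmod w < 1 \<Longrightarrow> card (fib w) \<le> n"
  using roots_Qp[of w] card_poly_roots_bound[OF Qp_nz[of w]] degree_Qp[of w] by simp

lemma fib_annulus: assumes "r1 < cmod w" "p \<in> fib w" shows "r1 < cmod p" "cmod p < 1" "Lam p \<noteq> 0"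
proof -
  have p: "cmod p < 1" "B p = w" using assms by (auto simp: fib_def)
  then show "r1 < cmod p" using B_le_z[of p] assms by simp
  show "cmod p < 1" by fact
  show "Lam p \<noteq> 0" using r1_props(3)[of p] \<open>r1 < cmod p\<close> p by auto
qed

lemma pderiv_Qp: assumes r: "r \<in> ball 0 R" "B r = w"
  shows "poly (pderiv (Qp w)) r = poly Dp r * Lam r"
proof -
  define G where "G z = poly Dp z * ((z - r) * Lk a n r z)" for z
  have eq: "poly (Qp w) z = G z" if "z \<in> ball 0 R" for z
    using poly_Qp_ball[OF that] KI'[OF that r(1)] r(2) by (simp add: G_def)
  have dL: "((\<lambda>z. Lk a n r z) has_field_derivative deriv (\<lambda>z. Lk a n r z) r) (at r)"
    by (rule holomorphic_derivI[OF holo_Lk]) (use r in auto)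
  have "(G has_field_derivative (poly Dp r * ((r - r) * deriv (\<lambda>z. Lk a n r z) r + (1 - 0) * Lk a n r r)
          + poly (pderiv Dp) r * ((r - r) * Lk a n r r))) (at r)"
    unfolding G_def by (intro DERIV_mult' DERIV_diff DERIV_ident DERIV_const dL poly_DERIV)
  then have dG: "(G has_field_derivative poly Dp r * Lam r) (at r)" by (simp add: Lam_def)
  moreover have "((\<lambda>z. poly (Qp w) z) has_field_derivative poly Dp r * Lam r) (at r)"
    by (rule has_field_derivative_transform_within_open[OF dG, of "ball 0 R"])
       (use r eq in auto)
  ultimately show ?thesis using poly_DERIV DERIV_unique by blast
qed

lemma fib_card_eq: assumes w: "r1 < cmod w" "cmod w < 1" shows "card (fib w) = n"
proof -
  have sf: "rsquarefree (Qp w)"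
    unfolding rsquarefree_roots
  proof (intro allI notI)
    fix r assume "poly (Qp w) r = 0 \<and> poly (pderiv (Qp w)) r = 0"
    then have r: "r \<in> fib w" "poly (pderiv (Qp w)) r = 0" using roots_Qp[OF w(2)] by auto
    then have rR: "r \<in> ball 0 R" "B r = w" using R_gt1 by (auto simp: fib_def)
    have "poly Dp r * Lam r \<noteq> 0" using Dp_nz[OF rR(1)] fib_annulus(3)[OF w(1) r(1)] by simp
    then show False using pderiv_Qp[OF rR] r(2) by simp
  qed
  have fin: "finite {z. poly (Qp w) z = 0}" using poly_roots_finite[OF Qp_nz] by blast
  have "n = degree (Qp w)" using degree_Qp by simp
  also have "\<dots> = degree (smult (lead_coeff (Qp w)) (\<Prod>z|poly (Qp w) z = 0. [:-z, 1:]))"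
    using complex_poly_decompose_rsquarefree[OF sf] by simp
  also have "\<dots> = degree (\<Prod>z|poly (Qp w) z = 0. [:-z, 1:])"
    using Qp_nz[of w] by simp
  also have "\<dots> = (\<Sum>z|poly (Qp w) z = 0. degree [:-z, 1:])"
    by (rule degree_prod_sum_eq) auto
  also have "\<dots> = card {z. poly (Qp w) z = 0}" by simp
  also have "\<dots> = card (fib w)" using roots_Qp[OF w(2)] by simp
  finally show ?thesis by simp
qed

end


context BP begin

definition h :: "(complex \<Rightarrow> complex) \<Rightarrow> complex \<Rightarrow> complex" where
  "h \<phi> w = (\<Sum>p\<in>fib w. residue (\<lambda>\<zeta>. \<phi> \<zeta> / (B \<zeta> - w)) p)"

lemma ball1_R: "ball 0 1 \<subseteq> ball 0 R" using R_gt1 by auto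

lemma B_in_ball: "z \<in> ball 0 1 \<Longrightarrow> B z \<in> ball 0 1"
  using B_le_z[of z] by auto

lemma res_simple:
  assumes holo: "\<phi> holomorphic_on ball 0 1" and p: "p \<in> ball 0 1" and L: "Lam p \<noteq> 0" and w: "B p = w"
  shows "residue (\<lambda>\<zeta>. \<phi> \<zeta> / (B \<zeta> - w)) p = \<phi> p / Lam p"
proof -
  have pR: "p \<in> ball 0 R" using p R_gt1 by simp
  have cL: "continuous (at p) (\<lambda>z. Lk a n p z)"
    using holomorphic_on_imp_continuous_on[OF holo_Lk] pR
    by (simp add: continuous_on_eq_continuous_at)
  obtain e where e: "e > 0" "\<And>y. dist p y < e \<Longrightarrow> Lk a n p y \<noteq> 0"
    using continuous_at_avoid[OF cL, of 0] L by (auto simp: Lam_def)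
  define s where "s = ball p (min e (1 - cmod p))"
  have s1: "s \<subseteq> ball 0 1"
  proof
    fix y assume "y \<in> s"
    then have "dist p y < 1 - cmod p" by (simp add: s_def)
    then have "cmod (y - p) < 1 - cmod p" by (simp add: dist_norm norm_minus_commute)
    moreover have "cmod y \<le> cmod p + cmod (y - p)" using norm_triangle_ineq[of p "y - p"] by simp
    ultimately show "y \<in> ball 0 1" by simp
  qed
  have sL: "\<And>y. y \<in> s \<Longrightarrow> Lk a n p y \<noteq> 0" using e unfolding s_def by auto
  have ps: "p \<in> s" using e p by (auto simp: s_def)
  have eqB: "B y - w = (y - p) * Lk a n p y" if "y \<in> s" for y
    using KI'[of y p] s1 that pR ball1_R w by auto
  show ?thesis
  proof (rule residue_simple')
    show "open s" by (simp add: s_def)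
    show "p \<in> s" by fact
    show "(\<lambda>\<zeta>. \<phi> \<zeta> / (B \<zeta> - w)) holomorphic_on s - {p}"
    proof (intro holomorphic_intros)
      show "\<phi> holomorphic_on s - {p}" by (rule holomorphic_on_subset[OF holo]) (use s1 in auto)
      show "B holomorphic_on s - {p}" by (rule holomorphic_on_subset[OF holo_B]) (use s1 ball1_R in auto)
      show "\<And>z. z \<in> s - {p} \<Longrightarrow> B z - w \<noteq> 0" using eqB sL by auto
    qed
    have c2: "continuous (at p) (\<lambda>z. \<phi> z / Lk a n p z)"
    proof (intro continuous_intros cL)
      show "continuous (at p) \<phi>"
        using holomorphic_on_imp_continuous_on[OF holo] p by (simp add: continuous_on_eq_continuous_at)
      show "Lk a n p p \<noteq> 0" using L by (simp add: Lam_def)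
    qed
    then have "((\<lambda>z. \<phi> z / Lk a n p z) \<longlongrightarrow> \<phi> p / Lam p) (at p)"
      by (simp add: isCont_def Lam_def)
    then show "((\<lambda>\<zeta>. \<phi> \<zeta> / (B \<zeta> - w) * (\<zeta> - p)) \<longlongrightarrow> \<phi> p / Lam p) (at p)"
    proof (rule Lim_transform_within_open[of _ _ _ _ s])
      fix x assume x: "x \<in> s" "x \<noteq> p"
      show "\<phi> x / Lk a n p x = \<phi> x / (B x - w) * (x - p)"
        unfolding eqB[OF x(1)] using sL[OF x(1)] x(2) by (simp add: field_simps)
    qed (use ps in \<open>auto simp: s_def\<close>)
  qed
qed

lemma contour_h:
  assumes holo: "\<phi> holomorphic_on ball 0 1" and w: "cmod w < 1" and \<rho>: "0 < \<rho>" "\<rho> < 1"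
    and sub: "fib w \<subseteq> ball 0 \<rho>"
  shows "((\<lambda>\<zeta>. \<phi> \<zeta> / (B \<zeta> - w)) has_contour_integral (2 * pi * \<i> * h \<phi> w)) (circlepath 0 \<rho>)"
proof -
  have hol: "(\<lambda>\<zeta>. \<phi> \<zeta> / (B \<zeta> - w)) holomorphic_on ball 0 1 - fib w"
  proof (intro holomorphic_intros)
    show "\<phi> holomorphic_on ball 0 1 - fib w" by (rule holomorphic_on_subset[OF holo]) auto
    show "B holomorphic_on ball 0 1 - fib w" by (rule holomorphic_on_subset[OF holo_B]) (use ball1_R in auto)
    show "\<And>z. z \<in> ball 0 1 - fib w \<Longrightarrow> B z - w \<noteq> 0" by (auto simp: fib_def)
  qed
  have pi: "path_image (circlepath 0 \<rho>) \<subseteq> ball 0 1 - fib w"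
    using \<rho> sub by auto
  have ci: "contour_integral (circlepath 0 \<rho>) (\<lambda>\<zeta>. \<phi> \<zeta> / (B \<zeta> - w))
      = 2 * pi * \<i> * (\<Sum>p\<in>fib w. winding_number (circlepath 0 \<rho>) p * residue (\<lambda>\<zeta>. \<phi> \<zeta> / (B \<zeta> - w)) p)"
  proof (rule Residue_theorem[OF _ _ fib_finite[OF w] hol])
    show "\<forall>z. z \<notin> ball 0 1 \<longrightarrow> winding_number (circlepath 0 \<rho>) z = 0"
    proof (intro allI impI)
      fix z :: complex assume "z \<notin> ball 0 1"
      then show "winding_number (circlepath 0 \<rho>) z = 0"
        by (intro winding_number_zero_outside[of _ "cball 0 \<rho>"]) (use \<rho> in auto)
    qed
  qed (use pi in \<open>auto intro: convex_connected\<close>)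
  also have "(\<Sum>p\<in>fib w. winding_number (circlepath 0 \<rho>) p * residue (\<lambda>\<zeta>. \<phi> \<zeta> / (B \<zeta> - w)) p) = h \<phi> w"
    unfolding h_def
    by (intro sum.cong refl) (use sub winding_number_circlepath in auto)
  finally have ci2: "contour_integral (circlepath 0 \<rho>) (\<lambda>\<zeta>. \<phi> \<zeta> / (B \<zeta> - w)) = 2 * pi * \<i> * h \<phi> w" .
  have "(\<lambda>\<zeta>. \<phi> \<zeta> / (B \<zeta> - w)) contour_integrable_on circlepath 0 \<rho>"
    by (rule contour_integrable_continuous_circlepath, rule continuous_on_subset[OF holomorphic_on_imp_continuous_on[OF hol] pi])
  from has_contour_integral_integral[OF this] show ?thesis unfolding ci2 .
qed

lemma representation:
  assumes holo: "f holomorphic_on ball 0 1" and z: "z \<in> ball 0 1"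
  shows "f z = (\<Sum>j<n. e0 a j z * h (\<lambda>\<zeta>. f \<zeta> * et a n j \<zeta>) (B z))"
proof -
  define w where "w = B z"
  have w: "cmod w < 1" using B_in_ball[OF z] by (simp add: w_def)
  have fin: "finite (fib w)" by (rule fib_finite[OF w])
  have zf: "z \<in> fib w" using z by (simp add: fib_def w_def)
  define m where "m = Max (norm ` fib w)"
  have m: "m < 1" unfolding m_def using fin zf by (subst Max_less_iff) (auto simp: fib_def)
  have mz: "\<And>p. p \<in> fib w \<Longrightarrow> cmod p \<le> m" unfolding m_def using fin by auto
  define \<rho> where "\<rho> = (1 + m) / 2"
  have m0: "0 \<le> m" using mz[OF zf] norm_ge_zero[of z] by linarith
  have \<rho>: "0 < \<rho>" "\<rho> < 1" "m < \<rho>" using m m0 by (auto simp: \<rho>_def)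
  have sub: "fib w \<subseteq> ball 0 \<rho>" using mz \<rho> by fastforce
  have zr: "cmod z < \<rho>" using mz[OF zf] \<rho> by simp
  have holj: "(\<lambda>\<zeta>. f \<zeta> * et a n j \<zeta>) holomorphic_on ball 0 1" if "j < n" for j
    by (intro holomorphic_intros holo holomorphic_on_subset[OF holo_et[OF that] ball1_R])
  have "((\<lambda>u. \<Sum>j<n. e0 a j z * (f u * et a n j u / (B u - w)))
        has_contour_integral (\<Sum>j<n. e0 a j z * (2 * pi * \<i> * h (\<lambda>\<zeta>. f \<zeta> * et a n j \<zeta>) w))) (circlepath 0 \<rho>)"
    by (intro has_contour_integral_sum has_contour_integral_lmul contour_h[OF holj w \<rho>(1,2) sub]) auto
  moreover have "(\<Sum>j<n. e0 a j z * (f u * et a n j u / (B u - w))) = f u / (u - z)"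
    if u: "u \<in> path_image (circlepath 0 \<rho>)" for u
  proof -
    have u1: "u \<in> ball 0 1" "cmod u = \<rho>" using u \<rho> by auto
    have uf: "u \<notin> fib w" using u1 sub by auto
    have Bu: "B u \<noteq> B z" using uf u1 by (auto simp: fib_def w_def)
    have uz: "u \<noteq> z" using u1 zr by auto
    have K: "B z - B u = (z - u) * Lk a n u z" using z u1 R_gt1 by (intro KI') auto
    then have Lnz: "Lk a n u z \<noteq> 0" using Bu by auto
    have "(\<Sum>j<n. e0 a j z * (f u * et a n j u / (B u - w))) = f u * Lk a n u z / (B u - B z)"
      unfolding Lk_def w_def by (simp add: sum_divide_distrib sum_distrib_left algebra_simps)
    also have "\<dots> = f u / (u - z)"
    proof -
      have K2: "B u - B z = (u - z) * Lk a n u z" using K by (simp add: algebra_simps)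
      show ?thesis unfolding K2 using Lnz uz by (simp add: field_simps)
    qed
    finally show ?thesis .
  qed
  ultimately have I1: "((\<lambda>u. f u / (u - z)) has_contour_integral (\<Sum>j<n. e0 a j z * (2 * pi * \<i> * h (\<lambda>\<zeta>. f \<zeta> * et a n j \<zeta>) w))) (circlepath 0 \<rho>)"
    by (rule has_contour_integral_eq)
  have I2: "((\<lambda>u. f u / (u - z)) has_contour_integral (2 * of_real pi * \<i> * f z)) (circlepath 0 \<rho>)"
  proof (rule Cauchy_integral_circlepath_simple)
    show "f holomorphic_on cball 0 \<rho>" by (rule holomorphic_on_subset[OF holo]) (use \<rho> in auto)
    show "cmod (z - 0) < \<rho>" using zr by simp
  qed
  have "2 * of_real pi * \<i> * f z = (\<Sum>j<n. e0 a j z * (2 * pi * \<i> * h (\<lambda>\<zeta>. f \<zeta> * et a n j \<zeta>) w))"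
    using has_contour_integral_unique[OF I2 I1] .
  also have "\<dots> = 2 * pi * \<i> * (\<Sum>j<n. e0 a j z * h (\<lambda>\<zeta>. f \<zeta> * et a n j \<zeta>) w)"
    by (simp add: sum_distrib_left algebra_simps)
  finally show ?thesis by (simp add: w_def)
qed

end


lemma param_holo:
  fixes \<psi> Bf :: "complex \<Rightarrow> complex"
  assumes c\<psi>: "continuous_on (sphere 0 \<rho>) \<psi>" and cB: "continuous_on (sphere 0 \<rho>) Bf"
    and U: "convex U" and nz: "\<And>w \<zeta>. w \<in> U \<Longrightarrow> \<zeta> \<in> sphere 0 \<rho> \<Longrightarrow> Bf \<zeta> \<noteq> w" and \<rho>: "\<rho> > 0"
  shows "(\<lambda>w. contour_integral (circlepath 0 \<rho>) (\<lambda>\<zeta>. \<psi> \<zeta> / (Bf \<zeta> - w))) holomorphic_on U"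
proof -
  define \<gamma> where "\<gamma> = circlepath 0 \<rho>"
  define d where "d t = 2 * pi * \<i> * \<rho> * exp (2 * of_real pi * \<i> * t)" for t :: real
  define F where "F w t = \<psi> (\<gamma> t) * d t / (Bf (\<gamma> t) - w)" for w t
  define Fx where "Fx w t = \<psi> (\<gamma> t) * d t / ((Bf (\<gamma> t) - w) * (Bf (\<gamma> t) - w))" for w t
  have g01: "\<gamma> t \<in> sphere 0 \<rho>" if "t \<in> {0..1}" for t
  proof -
    have "circlepath 0 \<rho> t \<in> circlepath 0 \<rho> ` {0..1}" using that by blast
    then show ?thesis using path_image_circlepath[of 0 \<rho>] \<rho> unfolding path_image_def \<gamma>_def by simp
  qed
  have cg: "continuous_on {0..1} \<gamma>"
    using valid_path_imp_path[OF valid_path_circlepath] unfolding \<gamma>_def path_def by blast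
  have c1: "continuous_on {0..1} (\<lambda>t. \<psi> (\<gamma> t))"
    by (rule continuous_on_compose2[OF c\<psi> cg]) (use g01 in auto)
  have c2: "continuous_on {0..1} (\<lambda>t. Bf (\<gamma> t))"
    by (rule continuous_on_compose2[OF cB cg]) (use g01 in auto)
  have cd: "continuous_on {0..1} d" unfolding d_def by (intro continuous_intros)
  have eq: "contour_integral (circlepath 0 \<rho>) (\<lambda>\<zeta>. \<psi> \<zeta> / (Bf \<zeta> - w)) = integral (cbox 0 1) (F w)" for w
    unfolding contour_integral_integral F_def d_def \<gamma>_def vector_derivative_circlepath cbox_interval
    by (simp add: algebra_simps)
  have "(\<lambda>w. integral (cbox 0 1) (F w)) holomorphic_on U"
  proof (rule leibniz_rule_holomorphic[where fx = Fx])
    fix w t assume w: "w \<in> U" and t: "(t::real) \<in> cbox 0 1"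
    have ne: "Bf (\<gamma> t) - w \<noteq> 0" using nz[OF w g01[of t]] t by (simp add: cbox_interval)
    show "((\<lambda>w. F w t) has_field_derivative Fx w t) (at w within U)"
    proof -
      have "((\<lambda>w. \<psi> (\<gamma> t) * d t / (Bf (\<gamma> t) - w)) has_field_derivative
         (0 * (Bf (\<gamma> t) - w) - \<psi> (\<gamma> t) * d t * (0 - 1)) / ((Bf (\<gamma> t) - w) * (Bf (\<gamma> t) - w))) (at w within U)"
        by (intro DERIV_divide DERIV_const DERIV_diff DERIV_ident ne)
      then show ?thesis unfolding F_def Fx_def by simp
    qed
  next
    fix w assume w: "w \<in> U"
    have "continuous_on {0..1} (F w)" unfolding F_def
      by (intro continuous_intros c1 c2 cd) (use nz[OF w g01] in \<open>auto simp: cbox_interval\<close>)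
    then show "F w integrable_on cbox 0 1" unfolding cbox_interval by (rule integrable_continuous_real)
  next
    have s1: "continuous_on (U \<times> cbox 0 1) (\<lambda>x. \<psi> (\<gamma> (snd x)))"
      by (rule continuous_on_compose2[OF c1 continuous_on_snd]) (auto simp: cbox_interval)
    have s2: "continuous_on (U \<times> cbox 0 1) (\<lambda>x. Bf (\<gamma> (snd x)))"
      by (rule continuous_on_compose2[OF c2 continuous_on_snd]) (auto simp: cbox_interval)
    have s3: "continuous_on (U \<times> cbox 0 1) (\<lambda>x. d (snd x))"
      by (rule continuous_on_compose2[OF cd continuous_on_snd]) (auto simp: cbox_interval)
    have "continuous_on (U \<times> cbox 0 1) (\<lambda>x. \<psi> (\<gamma> (snd x)) * d (snd x) / ((Bf (\<gamma> (snd x)) - fst x) * (Bf (\<gamma> (snd x)) - fst x)))"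
      by (intro continuous_intros s1 s2 s3) (use nz g01 in \<open>auto simp: cbox_interval\<close>)
    then show "continuous_on (U \<times> cbox 0 1) (\<lambda>(w, t). Fx w t)"
      by (simp add: Fx_def case_prod_beta)
  qed (rule U)
  then show ?thesis unfolding eq .
qed

context BP begin

lemma holo_h: assumes holo: "\<phi> holomorphic_on ball 0 1" shows "h \<phi> holomorphic_on ball 0 1"
proof -
  have "\<exists>f'. (h \<phi> has_field_derivative f') (at w0)" if w0: "w0 \<in> ball 0 1" for w0
  proof -
    define m where "m = (1 + cmod w0) / 2"
    have m: "m < 1" "cmod w0 < m" using w0 by (auto simp: m_def)
    obtain \<rho> where \<rho>: "0 < \<rho>" "\<rho> < 1" and \<rho>B: "\<And>z. \<rho> \<le> cmod z \<Longrightarrow> cmod z \<le> 1 \<Longrightarrow> m < cmod (B z)"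
      using B_near[OF m(1)] by blast
    define U where "U = ball (0::complex) m"
    have subf: "fib w \<subseteq> ball 0 \<rho>" if "w \<in> U" for w
    proof
      fix p assume p: "p \<in> fib w"
      then have pp: "cmod p < 1" "B p = w" by (auto simp: fib_def)
      have wm: "cmod w < m" using that by (simp add: U_def)
      show "p \<in> ball 0 \<rho>"
      proof (rule ccontr)
        assume "p \<notin> ball 0 \<rho>"
        then have "\<rho> \<le> cmod p" by simp
        then have "m < cmod (B p)" using \<rho>B pp(1) by simp
        then show False using pp wm by simp
      qed
    qed
    define G where "G w = contour_integral (circlepath 0 \<rho>) (\<lambda>\<zeta>. \<phi> \<zeta> / (B \<zeta> - w))" for w
    have hG: "h \<phi> w = G w / (2 * pi * \<i>)" if "w \<in> U" for w
    proof -
      have "cmod w < 1" using that m by (simp add: U_def)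
      from contour_h[OF holo this \<rho> subf[OF that]] show ?thesis
        unfolding G_def by (simp add: contour_integral_unique)
    qed
    have "G holomorphic_on U" unfolding G_def
    proof (rule param_holo)
      show "continuous_on (sphere 0 \<rho>) \<phi>"
        by (rule continuous_on_subset[OF holomorphic_on_imp_continuous_on[OF holo]]) (use \<rho> in auto)
      show "continuous_on (sphere 0 \<rho>) B"
        by (rule continuous_on_subset[OF holomorphic_on_imp_continuous_on[OF holo_B]]) (use \<rho> R_gt1 in auto)
      show "convex U" by (simp add: U_def)
      show "B \<zeta> \<noteq> w" if "w \<in> U" "\<zeta> \<in> sphere 0 \<rho>" for w \<zeta>
      proof -
        have "cmod \<zeta> = \<rho>" using that by simp
        then have "m < cmod (B \<zeta>)" using \<rho>B \<rho> by simp
        moreover have "cmod w < m" using that by (simp add: U_def)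
        ultimately show ?thesis by auto
      qed
    qed (rule \<rho>(1))
    then have "(\<lambda>w. G w / (2 * pi * \<i>)) holomorphic_on U" by (intro holomorphic_intros) auto
    then have "((\<lambda>w. G w / (2 * pi * \<i>)) has_field_derivative deriv (\<lambda>w. G w / (2 * pi * \<i>)) w0) (at w0)"
      by (rule holomorphic_derivI) (use m in \<open>auto simp: U_def\<close>)
    then have "(h \<phi> has_field_derivative deriv (\<lambda>w. G w / (2 * pi * \<i>)) w0) (at w0)"
      by (rule has_field_derivative_transform_within_open[of _ _ _ U]) (use m hG in \<open>auto simp: U_def\<close>)
    then show ?thesis by blast
  qed
  then show ?thesis by (simp add: holomorphic_on_open)
qed

lemma bounded_h:
  assumes f: "f \<in> Hinf" and j: "j < n"
  shows "bounded (h (\<lambda>\<zeta>. f \<zeta> * et a n j \<zeta>) ` ball 0 1)"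
proof -
  define \<phi> where "\<phi> \<zeta> = f \<zeta> * et a n j \<zeta>" for \<zeta>
  have holf: "f holomorphic_on ball 0 1" and bf: "bounded (f ` ball 0 1)" using f by (auto simp: Hinf_def)
  have holphi: "\<phi> holomorphic_on ball 0 1" unfolding \<phi>_def
    by (intro holomorphic_intros holf holomorphic_on_subset[OF holo_et[OF j] ball1_R])
  obtain Mf where MfA: "\<forall>x\<in>f ` ball 0 1. cmod x \<le> Mf" using bf unfolding bounded_iff by blast
  then have Mf: "\<And>z. z \<in> ball 0 1 \<Longrightarrow> cmod (f z) \<le> Mf" by blast
  have "compact (et a n j ` cball 0 1)"
    by (intro compact_continuous_image continuous_on_subset[OF holomorphic_on_imp_continuous_on[OF holo_et[OF j]]])
       (use R_gt1 in auto)
  then have "bounded (et a n j ` cball 0 1)" by (rule compact_imp_bounded)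
  then obtain Me where MeA: "\<forall>x\<in>et a n j ` cball 0 1. cmod x \<le> Me"
    unfolding bounded_iff by blast
  then have Me: "\<And>z. z \<in> cball 0 1 \<Longrightarrow> cmod (et a n j z) \<le> Me" by blast
  have hc: "continuous_on (cball 0 r1) (h \<phi>)"
    by (rule continuous_on_subset[OF holomorphic_on_imp_continuous_on[OF holo_h[OF holphi]]]) (use r1_props in auto)
  have "compact (h \<phi> ` cball 0 r1)" by (intro compact_continuous_image hc) auto
  then have "bounded (h \<phi> ` cball 0 r1)" by (rule compact_imp_bounded)
  then obtain K where KA: "\<forall>x\<in>h \<phi> ` cball 0 r1. cmod x \<le> K"
    unfolding bounded_iff by blast
  then have K: "\<And>w. w \<in> cball 0 r1 \<Longrightarrow> cmod (h \<phi> w) \<le> K" by blast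
  have "cmod (f 0) \<le> Mf" using Mf[of 0] by simp
  then have Mf0: "0 \<le> Mf" using norm_ge_zero[of "f 0"] by linarith
  have "cmod (et a n j 0) \<le> Me" using Me[of 0] by simp
  then have Me0: "0 \<le> Me" using norm_ge_zero[of "et a n j 0"] by linarith
  have outer: "cmod (h \<phi> w) \<le> real n * (2 * Mf * Me)" if w: "r1 < cmod w" "cmod w < 1" for w
  proof -
    have "cmod (h \<phi> w) \<le> (\<Sum>p\<in>fib w. cmod (residue (\<lambda>\<zeta>. \<phi> \<zeta> / (B \<zeta> - w)) p))"
      unfolding h_def by (rule norm_sum)
    also have "\<dots> \<le> (\<Sum>p\<in>fib w. 2 * Mf * Me)"
    proof (rule sum_mono)
      fix p assume p: "p \<in> fib w"
      have pb: "p \<in> ball 0 1" "B p = w" using p by (auto simp: fib_def)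
      have L: "Lam p \<noteq> 0" "1/2 < cmod (Lam p)"
        using fib_annulus[OF w(1) p] r1_props(3)[of p] by auto
      have "residue (\<lambda>\<zeta>. \<phi> \<zeta> / (B \<zeta> - w)) p = \<phi> p / Lam p"
        by (rule res_simple[OF holphi pb(1) L(1) pb(2)])
      also have "cmod (\<phi> p / Lam p) = cmod (f p) * cmod (et a n j p) / cmod (Lam p)"
        by (simp add: \<phi>_def norm_mult norm_divide)
      also have "\<dots> \<le> Mf * Me / (1/2)"
      proof (rule frac_le)
        show "0 \<le> Mf * Me" using Mf0 Me0 by simp
        show "cmod (f p) * cmod (et a n j p) \<le> Mf * Me"
          by (rule mult_mono) (use Mf[OF pb(1)] Me[of p] pb(1) Me0 Mf0 in auto)
        show "0 < 1/(2::real)" by simp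
        show "1/2 \<le> cmod (Lam p)" using L by simp
      qed
      finally show "cmod (residue (\<lambda>\<zeta>. \<phi> \<zeta> / (B \<zeta> - w)) p) \<le> 2 * Mf * Me" by simp
    qed
    also have "\<dots> = real (card (fib w)) * (2 * Mf * Me)" by simp
    also have "\<dots> \<le> real n * (2 * Mf * Me)"
      by (intro mult_right_mono) (use fib_card[of w] w Mf0 Me0 in auto)
    finally show ?thesis .
  qed
  have "\<forall>w\<in>ball 0 1. cmod (h \<phi> w) \<le> max K (real n * (2 * Mf * Me))"
  proof
    fix w :: complex assume w: "w \<in> ball 0 1"
    show "cmod (h \<phi> w) \<le> max K (real n * (2 * Mf * Me))"
    proof (cases "cmod w \<le> r1")
      case True then show ?thesis using K[of w] by simp
    next
      case False then show ?thesis using outer[of w] w by simp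
    qed
  qed
  then show ?thesis unfolding \<phi>_def[symmetric] bounded_iff by blast
qed

lemma existence:
  assumes f: "f \<in> Hinf"
  shows "\<exists>g. (\<forall>j<n. g j \<in> Hinf_comp B) \<and> (\<forall>z\<in>ball 0 1. f z = (\<Sum>j<n. e0 a j z * g j z))"
proof -
  define g where "g j z = h (\<lambda>\<zeta>. f \<zeta> * et a n j \<zeta>) (B z)" for j z
  have holf: "f holomorphic_on ball 0 1" using f by (auto simp: Hinf_def)
  have "g j \<in> Hinf_comp B" if j: "j < n" for j
  proof -
    have "(\<lambda>\<zeta>. f \<zeta> * et a n j \<zeta>) holomorphic_on ball 0 1"
      by (intro holomorphic_intros holf holomorphic_on_subset[OF holo_et[OF j] ball1_R])
    then have "h (\<lambda>\<zeta>. f \<zeta> * et a n j \<zeta>) holomorphic_on ball 0 1" by (rule holo_h)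
    then have "h (\<lambda>\<zeta>. f \<zeta> * et a n j \<zeta>) \<in> Hinf"
      unfolding Hinf_def using bounded_h[OF f j] by blast
    then show ?thesis unfolding Hinf_comp_def g_def by blast
  qed
  moreover have "\<forall>z\<in>ball 0 1. f z = (\<Sum>j<n. e0 a j z * g j z)"
    using representation[OF holf] by (simp add: g_def)
  ultimately show ?thesis by blast
qed

end


lemma cont_zero_ext:
  fixes G :: "complex \<Rightarrow> complex"
  assumes c: "continuous_on (ball 0 1) G" and x: "x \<in> ball 0 1"
    and z: "\<And>z. z \<in> ball 0 1 \<Longrightarrow> z \<noteq> x \<Longrightarrow> G z = 0"
  shows "G x = 0"
proof -
  have "(G \<longlongrightarrow> G x) (at x)"
    using c x by (simp add: continuous_on_eq_continuous_at isCont_def)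
  moreover have "(G \<longlongrightarrow> 0) (at x)"
  proof (rule Lim_transform_within_open[of "\<lambda>_. 0" 0 x UNIV "ball 0 1"])
    show "((\<lambda>_. 0) \<longlongrightarrow> (0::complex)) (at x)" by simp
  qed (use x z in auto)
  ultimately show ?thesis by (rule tendsto_unique[rotated]) simp
qed

lemma den1: "cmod c < 1 \<Longrightarrow> cmod z < 1 \<Longrightarrow> 1 - cnj c * z \<noteq> 0"
proof
  assume c: "cmod c < 1" "cmod z < 1" and "1 - cnj c * z = 0"
  then have "cnj c * z = 1" by simp
  then have e: "cmod c * cmod z = 1" by (metis complex_mod_cnj norm_mult norm_one)
  have "cmod c * cmod z < 1 * 1" by (rule mult_strict_mono) (use c in auto)
  then show False using e by simp
qed

lemma cont_e0:
  assumes "\<forall>i\<in>{1..Suc j}. cmod (a i) < 1"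
  shows "continuous_on (ball 0 1) (e0 a j)"
proof -
  have d: "\<And>i z. i \<in> {1..Suc j} \<Longrightarrow> z \<in> ball 0 1 \<Longrightarrow> 1 - cnj (a i) * z \<noteq> 0"
    using assms den1 by auto
  show ?thesis unfolding e0_sq blaschke_partial_def
    by (intro continuous_intros) (use d in \<open>auto simp: atLeastAtMost_iff\<close>)
qed

lemma e0_shift:
  "e0 a (Suc j) z = ((z - a 1) / (1 - cnj (a 1) * z)) * e0 (\<lambda>i. a (Suc i)) j z"
proof -
  have "blaschke_partial a (Suc j) z = ((z - a 1) / (1 - cnj (a 1) * z)) * (\<Prod>i=Suc 1..Suc j. (z - a i) / (1 - cnj (a i) * z))"
    unfolding blaschke_partial_def by (intro prod.atLeast_Suc_atMost) simp
  also have "(\<Prod>i=Suc 1..Suc j. (z - a i) / (1 - cnj (a i) * z)) = blaschke_partial (\<lambda>i. a (Suc i)) j z"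
    unfolding blaschke_partial_def by (rule prod.shift_bounds_cl_Suc_ivl)
  finally have BP: "blaschke_partial a (Suc j) z = ((z - a 1) / (1 - cnj (a 1) * z)) * blaschke_partial (\<lambda>i. a (Suc i)) j z" .
  show ?thesis unfolding e0_sq BP by (simp add: sq_def ac_simps)
qed

lemma e0_indep:
  assumes "\<forall>i\<in>{1..N}. cmod (a i) < 1" "\<forall>z\<in>ball 0 1. (\<Sum>j<N. c j * e0 a j z) = 0"
  shows "\<forall>j<N. c j = 0"
  using assms
proof (induction N arbitrary: a c)
  case 0
  then show ?case by simp
next
  case (Suc N)
  have a1: "cmod (a 1) < 1" using Suc.prems(1) by simp
  have a1b: "a 1 \<in> ball 0 1" using a1 by simp
  have split: "(\<Sum>j<Suc N. c j * e0 a j z) = c 0 * e0 a 0 z + (\<Sum>j<N. c (Suc j) * e0 a (Suc j) z)" for z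
    by (rule sum.lessThan_Suc_shift)
  have e0z: "e0 a (Suc j) (a 1) = 0" for j by (simp add: e0_shift)
  have e00: "e0 a 0 (a 1) \<noteq> 0"
  proof -
    have "sq a 0 \<noteq> 0"
    proof -
      have "(cmod (a 1))\<^sup>2 < 1" using a1 by (simp add: abs_square_less_1)
      then show ?thesis by (simp add: sq_def)
    qed
    moreover have "1 - cnj (a 1) * a 1 \<noteq> 0" using den1[OF a1 a1] .
    ultimately show ?thesis by (simp add: e0_sq blaschke_partial_def)
  qed
  have "c 0 * e0 a 0 (a 1) = 0"
    using Suc.prems(2) a1b split[of "a 1"] e0z by simp
  then have c0: "c 0 = 0" using e00 by simp
  define a' where "a' i = a (Suc i)" for i
  define c' where "c' j = c (Suc j)" for j
  define Gf where "Gf z = (\<Sum>j<N. c' j * e0 a' j z)" for z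
  have a'b: "\<forall>i\<in>{1..N}. cmod (a' i) < 1" using Suc.prems(1) by (auto simp: a'_def)
  have eqG: "(\<Sum>j<Suc N. c j * e0 a j z) = ((z - a 1) / (1 - cnj (a 1) * z)) * Gf z" for z
    unfolding split c0 Gf_def a'_def c'_def by (simp add: e0_shift sum_distrib_left algebra_simps)
  have Gz: "Gf z = 0" if z: "z \<in> ball 0 1" "z \<noteq> a 1" for z
  proof -
    have "((z - a 1) / (1 - cnj (a 1) * z)) * Gf z = 0" unfolding eqG[symmetric] using Suc.prems(2) z by blast
    moreover have "(z - a 1) / (1 - cnj (a 1) * z) \<noteq> 0" using z den1[OF a1, of z] by simp
    ultimately show ?thesis by simp
  qed
  have cG: "continuous_on (ball 0 1) Gf"
    unfolding Gf_def by (intro continuous_intros cont_e0) (use a'b in auto)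
  have "Gf (a 1) = 0" by (rule cont_zero_ext[OF cG a1b Gz])
  then have "\<forall>z\<in>ball 0 1. Gf z = 0" using Gz by blast
  then have "\<forall>j<N. c' j = 0" using Suc.IH[OF a'b] unfolding Gf_def by blast
  then show ?case using c0 by (auto simp: c'_def less_Suc_eq_0_disj)
qed

context BP begin

definition Aj where "Aj j = (\<Prod>i\<in>{1..j}. [:- a i, 1:])"
definition Cj where "Cj j = (\<Prod>i\<in>{Suc (Suc j)..n}. [:1, - cnj (a i):])"

lemma Dp_e0: assumes z: "z \<in> ball 0 R" and j: "j < n"
  shows "poly Dp z * e0 a j z = sq a j * poly (Aj j) z * poly (Cj j) z"
proof -
  have pA: "poly (Aj j) z = (\<Prod>i=1..j. z - a i)" unfolding Aj_def poly_prod by (intro prod.cong) auto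
  have pC: "poly (Cj j) z = (\<Prod>i=Suc (Suc j)..n. 1 - cnj (a i) * z)"
    unfolding Cj_def poly_prod by (intro prod.cong) (auto simp: algebra_simps)
  have D: "poly Dp z = (\<Prod>i=1..j. 1 - cnj (a i) * z) * (1 - cnj (a (Suc j)) * z) * (\<Prod>i=Suc (Suc j)..n. 1 - cnj (a i) * z)"
    unfolding poly_Dp by (rule prod_split3[OF j])
  have dj: "(\<Prod>i=1..j. 1 - cnj (a i) * z) \<noteq> 0" using den_nz[OF z] j by auto
  have dj1: "1 - cnj (a (Suc j)) * z \<noteq> 0" using den_nz[OF z] j by auto
  have bp: "blaschke_partial a j z = (\<Prod>i=1..j. z - a i) / (\<Prod>i=1..j. 1 - cnj (a i) * z)"
    unfolding blaschke_partial_def by (rule prod_dividef)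
  show ?thesis unfolding D pA pC e0_sq bp using dj dj1 by (simp add: field_simps)
qed

lemma degree_AC: assumes j: "j < n" shows "degree (Aj j * Cj j) < n"
proof -
  have "degree (Aj j) \<le> (\<Sum>i\<in>{1..j}. degree [:- a i, 1:])"
    unfolding Aj_def using degree_prod_sum_le[of "{1..j}" "\<lambda>i. [:- a i, 1:]"] by (simp add: o_def)
  also have "\<dots> = j" by simp
  finally have dA: "degree (Aj j) \<le> j" .
  have "degree (Cj j) \<le> (\<Sum>i\<in>{Suc (Suc j)..n}. degree [:1, - cnj (a i):])"
    unfolding Cj_def using degree_prod_sum_le[of "{Suc (Suc j)..n}" "\<lambda>i. [:1, - cnj (a i):]"] by (simp add: o_def)
  also have "\<dots> \<le> (\<Sum>i\<in>{Suc (Suc j)..n}. 1)" by (intro sum_mono) (simp add: degree_pCons_le)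
  also have "\<dots> = n - Suc j" by simp
  finally have dC: "degree (Cj j) \<le> n - Suc j" .
  have "degree (Aj j * Cj j) \<le> degree (Aj j) + degree (Cj j)" by (rule degree_mult_le)
  also have "\<dots> \<le> j + (n - Suc j)" using dA dC by simp
  also have "\<dots> < n" using j by simp
  finally show ?thesis .
qed

lemma unique_w:
  assumes w: "r1 < cmod w" "cmod w < 1" and van: "\<forall>p\<in>fib w. (\<Sum>j<n. c j * e0 a j p) = 0"
  shows "\<forall>j<n. c j = 0"
proof -
  define Rc where "Rc = (\<Sum>j<n. smult (c j * sq a j) (Aj j * Cj j))"
  have pR: "poly Rc z = poly Dp z * (\<Sum>j<n. c j * e0 a j z)" if z: "z \<in> ball 0 R" for z
  proof -
    have "poly Rc z = (\<Sum>j<n. c j * (sq a j * poly (Aj j) z * poly (Cj j) z))"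
      unfolding Rc_def poly_sum by (intro sum.cong) (auto simp: algebra_simps)
    also have "\<dots> = (\<Sum>j<n. c j * (poly Dp z * e0 a j z))"
      by (intro sum.cong refl) (simp add: Dp_e0[OF z])
    also have "\<dots> = poly Dp z * (\<Sum>j<n. c j * e0 a j z)"
      by (simp add: sum_distrib_left algebra_simps)
    finally show ?thesis .
  qed
  have Rc0: "Rc = 0"
  proof (rule ccontr)
    assume nz: "Rc \<noteq> 0"
    have dR: "degree Rc < n"
    proof -
      have "degree Rc \<le> n - 1"
        unfolding Rc_def
      proof (rule degree_sum_le)
        fix j assume "j \<in> {..<n}"
        then have "degree (Aj j * Cj j) < n" using degree_AC by simp
        then show "degree (smult (c j * sq a j) (Aj j * Cj j)) \<le> n - 1"
          using degree_smult_le[of "c j * sq a j" "Aj j * Cj j"] by linarith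
      qed simp
      then show ?thesis using n1 by simp
    qed
    have sub: "fib w \<subseteq> {z. poly Rc z = 0}"
    proof
      fix p assume p: "p \<in> fib w"
      then have "p \<in> ball 0 R" using R_gt1 by (auto simp: fib_def)
      then show "p \<in> {z. poly Rc z = 0}" using pR van p by simp
    qed
    have "card (fib w) \<le> card {z. poly Rc z = 0}"
      by (rule card_mono[OF poly_roots_finite[OF nz] sub])
    also have "\<dots> \<le> degree Rc" by (rule card_poly_roots_bound[OF nz])
    finally show False using fib_card_eq[OF w] dR by simp
  qed
  have "\<forall>z\<in>ball 0 1. (\<Sum>j<n. c j * e0 a j z) = 0"
  proof
    fix z :: complex assume z: "z \<in> ball 0 1"
    then have zR: "z \<in> ball 0 R" using R_gt1 by simp
    have "poly Dp z * (\<Sum>j<n. c j * e0 a j z) = 0" using pR[OF zR] Rc0 by simp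
    then show "(\<Sum>j<n. c j * e0 a j z) = 0" using Dp_nz[OF zR] by simp
  qed
  then show ?thesis using e0_indep[of n a c] ain by blast
qed

lemma uniqueness:
  assumes g: "\<forall>j<n. g j \<in> Hinf_comp B" and s: "\<forall>z\<in>ball 0 1. (\<Sum>j<n. e0 a j z * g j z) = 0"
  shows "\<forall>j<n. \<forall>z\<in>ball 0 1. g j z = 0"
proof -
  have "\<forall>j. \<exists>F. j < n \<longrightarrow> F \<in> Hinf \<and> (\<forall>z\<in>ball 0 1. g j z = F (B z))"
    using g unfolding Hinf_comp_def by blast
  then have "\<exists>K. \<forall>j. j < n \<longrightarrow> K j \<in> Hinf \<and> (\<forall>z\<in>ball 0 1. g j z = K j (B z))" by (rule choice)
  then obtain K where KA: "\<forall>j. j < n \<longrightarrow> K j \<in> Hinf \<and> (\<forall>z\<in>ball 0 1. g j z = K j (B z))" by blast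
  then have K: "\<And>j. j < n \<Longrightarrow> K j \<in> Hinf \<and> (\<forall>z\<in>ball 0 1. g j z = K j (B z))" by blast
  define A where "A = ball (0::complex) 1 - cball 0 r1"
  have Azero: "K j w = 0" if j: "j < n" and w: "w \<in> A" for j w
  proof -
    have w1: "r1 < cmod w" "cmod w < 1" using w by (auto simp: A_def)
    have "\<forall>p\<in>fib w. (\<Sum>j<n. K j w * e0 a j p) = 0"
    proof
      fix p assume p: "p \<in> fib w"
      then have pb: "p \<in> ball 0 1" "B p = w" by (auto simp: fib_def)
      have "(\<Sum>j<n. e0 a j p * g j p) = 0" using s pb by simp
      moreover have "\<And>j. j < n \<Longrightarrow> g j p = K j w" using K pb by auto
      ultimately show "(\<Sum>j<n. K j w * e0 a j p) = 0" by (simp add: mult.commute)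
    qed
    then show ?thesis using unique_w[OF w1, of "\<lambda>j. K j w"] j by blast
  qed
  show ?thesis
  proof (intro allI impI ballI)
    fix j z assume j: "j < n" and z: "(z::complex) \<in> ball 0 1"
    have Kh: "K j holomorphic_on ball 0 1" using K[OF j] by (simp add: Hinf_def)
    have Bz: "B z \<in> ball 0 1" by (rule B_in_ball[OF z])
    have Ane: "A \<noteq> {}"
    proof -
      define x0 where "x0 = complex_of_real ((1 + r1) / 2)"
      have nx: "cmod x0 = (1 + r1) / 2" unfolding x0_def norm_of_real using r1_props by simp
      have "x0 \<in> A" using r1_props nx by (simp add: A_def)
      then show ?thesis by blast
    qed
    have oA: "open A" by (simp add: A_def open_Diff)
    have sA: "A \<subseteq> ball 0 1" by (auto simp: A_def)
    have "K j (B z) = (\<lambda>_. 0) (B z)"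
      by (rule analytic_continuation_open[of A "ball 0 1" "K j" "\<lambda>_. 0" "B z"])
         (use oA Ane sA Kh Bz Azero[OF j] in auto)
    then show "g j z = 0" using K[OF j] z by simp
  qed
qed

end

theorem mainTheorem11:
  fixes a :: "nat \<Rightarrow> complex" and n :: nat
  assumes "n \<ge> 1"
    and "\<forall>i\<in>{1..n}. cmod (a i) < 1"
    and "a 1 = 0"
  shows "(\<forall>f\<in>Hinf. \<exists>g. (\<forall>j<n. g j \<in> Hinf_comp (blaschke_partial a n)) \<and>
            (\<forall>z\<in>ball 0 1. f z = (\<Sum>j<n. e0 a j z * g j z)))
       \<and> (\<forall>g. (\<forall>j<n. g j \<in> Hinf_comp (blaschke_partial a n)) \<and>
              (\<forall>z\<in>ball 0 1. (\<Sum>j<n. e0 a j z * g j z) = 0)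
              \<longrightarrow> (\<forall>j<n. \<forall>z\<in>ball 0 1. g j z = 0))"
proof -
  interpret BP a n by unfold_locales (use assms in auto)
  show ?thesis using existence uniqueness by blast
qed

end
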